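(* Under the hypotheses of Theorem 2 (factorized true joint propensity $p(t,z\mid\mathbf{x})=\phi(z;\mathbf{x}_z)e(t;\mathbf{x}_t)$, estimates $e_\eta,\phi_\eta$ with odds ratios bounded by $\Gamma_t\ge1$ and $\Gamma_z\ge1$ as stated there, weights $w_\eta(t,z,\mathbf{x})=1/(\phi_\eta(z;\mathbf{x}_z)e_\eta(t;\mathbf{x}_t))$ and one-to-one $\Phi$), the Kullback–Leibler divergence satisfies $$D_{KL}\big(p(\mathbf{x})p(t,z)\,\big\|\,q_\eta(\mathbf{x}\mid t,z)p(t,z)\big)=D_{KL}\big(p_\Phi(r)p(t,z)\,\big\|\,q_{\Phi,\eta}(r\mid t,z)p(t,z)\big)\le 2(\log\Gamma_t+\log\Gamma_z),$$ and consequently the total variation distance satisfies $\delta\big(p_\Phi(r)p(t,z),\,q_{\Phi,\eta}(r\mid t,z)p(t,z)\big)\le\sqrt{\log\Gamma_t+\log\Gamma_z}$.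
   Context: Setting: combined features $\mathbf{x}\in\mathcal{X}'=\mathcal{X}\times\mathcal{X}^{|\mathcal{N}|}$, treatment $t\in\{0,1\}$, exposure $z\in[0,1]$ with joint distribution, marginals $p(\mathbf{x})$, $p(t,z)$, conditionals $p(\mathbf{x}\mid t,z)$, and $p(t,z\mid\mathbf{x})>0$. $\mathbf{x}_t,\mathbf{x}_z$ are sub-vectors of $\mathbf{x}$; $e(t;\mathbf{x}_t)=p(t\mid\mathbf{x}_t)$, $\phi(z;\mathbf{x}_z)=p(z\mid\mathbf{x}_z)$. Odds-ratio condition: $\Gamma_t^{-1}\le e_\eta(t;\mathbf{x}_t)/e(t;\mathbf{x}_t)\le\Gamma_t$ and $\Gamma_z^{-1}\le\phi_\eta(z;\mathbf{x}_z)/\phi(z;\mathbf{x}_z)\le\Gamma_z$ for all arguments. $q_\eta(\mathbf{x}\mid t,z)=w_\eta(t,z,\mathbf{x})p(\mathbf{x}\mid t,z)/\int w_\eta(t,z,\mathbf{x}')p(\mathbf{x}'\mid t,z)d\mathbf{x}'$. $p_\Phi(r)$, $q_{\Phi,\eta}(r\mid t,z)$ are the push-forwards under $\Phi$ of $p(\mathbf{x})$, $q_\eta(\mathbf{x}\mid t,z)$. Total variation distance: $\delta(P,Q)=\frac12\sup_{\|m\|_\infty\le1}\int m\,(dP-dQ)$. *)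

theory Defs
  imports "HOL-Probability.Probability"
begin

text \<open>Base measure for (t,z): t ranges over {0,1} (encoded as bool, True = treated),
  z over [0,1]; counting measure on t times Lebesgue measure on [0,1].\<close>
definition TZ :: "(bool \<times> real) measure" where
  "TZ = count_space UNIV \<Otimes>\<^sub>M restrict_space lborel {0..1}"

definition marg_x :: "'x measure \<Rightarrow> ('x \<times> (bool \<times> real) \<Rightarrow> real) \<Rightarrow> 'x \<Rightarrow> real" where
  "marg_x MX f x = enn2real (\<integral>\<^sup>+ tz. ennreal (f (x, tz)) \<partial>TZ)"

definition marg_tz :: "'x measure \<Rightarrow> ('x \<times> (bool \<times> real) \<Rightarrow> real) \<Rightarrow> bool \<times> real \<Rightarrow> real" where
  "marg_tz MX f tz = enn2real (\<integral>\<^sup>+ x. ennreal (f (x, tz)) \<partial>MX)"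

definition cond_x :: "'x measure \<Rightarrow> ('x \<times> (bool \<times> real) \<Rightarrow> real) \<Rightarrow> bool \<times> real \<Rightarrow> 'x \<Rightarrow> real" where
  "cond_x MX f tz x = f (x, tz) / marg_tz MX f tz"

definition post_tz :: "'x measure \<Rightarrow> ('x \<times> (bool \<times> real) \<Rightarrow> real) \<Rightarrow> 'x \<Rightarrow> bool \<times> real \<Rightarrow> real" where
  "post_tz MX f x tz = f (x, tz) / marg_x MX f x"

definition q_eta :: "'x measure \<Rightarrow> ('x \<times> (bool \<times> real) \<Rightarrow> real) \<Rightarrow> (bool \<times> real \<Rightarrow> 'x \<Rightarrow> real)
    \<Rightarrow> bool \<times> real \<Rightarrow> 'x \<Rightarrow> real" where
  "q_eta MX f w tz x = w tz x * cond_x MX f tz x /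
      enn2real (\<integral>\<^sup>+ x'. ennreal (w tz x' * cond_x MX f tz x') \<partial>MX)"

definition P_meas :: "'x measure \<Rightarrow> ('x \<times> (bool \<times> real) \<Rightarrow> real) \<Rightarrow> ('x \<times> (bool \<times> real)) measure" where
  "P_meas MX f = density MX (\<lambda>x. ennreal (marg_x MX f x)) \<Otimes>\<^sub>M density TZ (\<lambda>tz. ennreal (marg_tz MX f tz))"

definition Q_meas :: "'x measure \<Rightarrow> ('x \<times> (bool \<times> real) \<Rightarrow> real) \<Rightarrow> (bool \<times> real \<Rightarrow> 'x \<Rightarrow> real)
    \<Rightarrow> ('x \<times> (bool \<times> real)) measure" where
  "Q_meas MX f w = density (MX \<Otimes>\<^sub>M TZ)
      (\<lambda>(x, tz). ennreal (q_eta MX f w tz x * marg_tz MX f tz))"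

definition P_Phi :: "'x measure \<Rightarrow> 'r measure \<Rightarrow> ('x \<Rightarrow> 'r) \<Rightarrow> ('x \<times> (bool \<times> real) \<Rightarrow> real)
    \<Rightarrow> ('r \<times> (bool \<times> real)) measure" where
  "P_Phi MX MR Phi f = distr (density MX (\<lambda>x. ennreal (marg_x MX f x))) MR Phi
      \<Otimes>\<^sub>M density TZ (\<lambda>tz. ennreal (marg_tz MX f tz))"

definition Q_Phi :: "'x measure \<Rightarrow> 'r measure \<Rightarrow> ('x \<Rightarrow> 'r) \<Rightarrow> ('x \<times> (bool \<times> real) \<Rightarrow> real)
    \<Rightarrow> (bool \<times> real \<Rightarrow> 'x \<Rightarrow> real) \<Rightarrow> ('r \<times> (bool \<times> real)) measure" where
  "Q_Phi MX MR Phi f w = distr (Q_meas MX f w) (MR \<Otimes>\<^sub>M TZ) (\<lambda>(x, tz). (Phi x, tz))"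

text \<open>Kullback--Leibler divergence D_KL(P || Q) with natural logarithm
  (the library's KL_divergence b M N is D(N || M)).\<close>
definition KL :: "'a measure \<Rightarrow> 'a measure \<Rightarrow> real" where
  "KL P Q = KL_divergence (exp 1) Q P"

definition tv_dist :: "'a measure \<Rightarrow> 'a measure \<Rightarrow> real" where
  "tv_dist P Q = 1/2 * (SUP m \<in> {m \<in> borel_measurable P. \<forall>y \<in> space P. \<bar>m y\<bar> \<le> 1}.
      (\<integral>y. m y \<partial>P) - (\<integral>y. m y \<partial>Q))"

end

theory Submission
  imports Defs
begin

lemma KL_density_bound:
  fixes p q :: "'a \<Rightarrow> real" and b :: real
  assumes [measurable]: "p \<in> borel_measurable M" "q \<in> borel_measurable M"
    and pn: "\<And>x. x \<in> space M \<Longrightarrow> 0 \<le> p x" and qn: "\<And>x. x \<in> space M \<Longrightarrow> 0 \<le> q x"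
    and pint: "(\<integral>\<^sup>+x. ennreal (p x) \<partial>M) = 1"
    and ae: "AE x in M. p x \<le> b * q x"
    and b: "1 \<le> b"
  shows "KL (density M p) (density M q) \<le> ln b"
proof -
  define h where "h x = p x / q x" for x
  have [measurable]: "h \<in> borel_measurable M" unfolding h_def by measurable
  let ?P = "density M p" and ?Q = "density M q"
  have PQ: "?P = density ?Q h"
  proof -
    have "density ?Q h = density M (\<lambda>x. ennreal (q x) * ennreal (h x))"
      by (rule density_density_eq) auto
    also have "\<dots> = ?P"
    proof (rule density_cong)
      show "AE x in M. ennreal (q x) * ennreal (h x) = ennreal (p x)"
        using ae AE_space
      proof eventually_elim
        case (elim x)
        show ?case
        proof (cases "q x = 0")
          case True
          then show ?thesis using elim b by (simp add: h_def ennreal_eq_0_iff)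
        next
          case False
          then show ?thesis using qn[OF elim(2)] by (simp add: h_def flip: ennreal_mult')
        qed
      qed
    qed auto
    finally show ?thesis ..
  qed
  have Pprob: "prob_space ?P"
  proof (rule prob_spaceI)
    have "emeasure ?P (space ?P) = (\<integral>\<^sup>+x. ennreal (p x) * indicator (space M) x \<partial>M)"
      by (simp add: emeasure_density)
    also have "\<dots> = (\<integral>\<^sup>+x. ennreal (p x) \<partial>M)"
      by (rule nn_integral_cong) simp
    finally show "emeasure ?P (space ?P) = 1" using pint by simp
  qed
  then interpret P: prob_space ?P .
  have sfP: "sigma_finite_measure ?P"
    using P.finite_measure_axioms finite_measure.sigma_finite_measure by blast
  have rn: "AE x in ?Q. ennreal (h x) = RN_deriv ?Q ?P x"
    by (rule RN_deriv_unique_sigma_finite[OF _ PQ[symmetric] sfP]) auto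
  have rnP: "AE x in ?P. ennreal (h x) = RN_deriv ?Q ?P x"
  proof -
    have ac: "absolutely_continuous ?Q ?P"
      by (subst PQ) (rule absolutely_continuousI_density, simp)
    show ?thesis by (rule absolutely_continuous_AE[OF _ ac rn]) simp
  qed
  have hleM: "AE x in M. h x \<le> b"
    using ae AE_space
  proof eventually_elim
    case (elim x)
    have "0 \<le> q x" using qn elim by auto
    then show ?case using elim b
      by (cases "q x = 0") (auto simp: h_def divide_le_eq)
  qed
  have hle: "AE x in ?P. h x \<le> b"
    using hleM by (subst AE_density) (auto elim!: eventually_mono)
  have hge: "AE x in ?P. 0 \<le> h x"
    by (subst AE_density) (auto intro!: AE_I2 simp: h_def pn qn)
  have KLeq: "KL ?P ?Q = integral\<^sup>L ?P (\<lambda>x. ln (h x))"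
    unfolding KL_def KL_divergence_def entropy_density_def
    apply (rule integral_cong_AE)
      apply measurable
    using rnP hge by eventually_elim (drule sym, simp add: log_def)
  show ?thesis
  proof (cases "integrable ?P (\<lambda>x. ln (h x))")
    case True
    have "integral\<^sup>L ?P (\<lambda>x. ln (h x)) \<le> integral\<^sup>L ?P (\<lambda>x. ln b)"
    proof (rule integral_mono_AE[OF True])
      show "AE x in ?P. ln (h x) \<le> ln b"
        using hle hge
      proof eventually_elim
        case (elim x)
        then show ?case using b by (cases "h x = 0") auto
      qed
    qed simp
    moreover have "measure ?P (space M) = 1" using P.prob_space by simp
    ultimately show ?thesis using KLeq by simp
  next
    case False
    then show ?thesis using KLeq b by (simp add: not_integrable_integral_eq)
  qed
qed

lemma pointwise_tv:
  fixes p q g b :: real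
  assumes "0 \<le> p" "0 \<le> q" "p \<le> b * q" "q \<le> b * p" "1 \<le> b" "\<bar>g\<bar> \<le> 1"
  shows "(p - q) * g \<le> 2 * (b / (b + 1)) * (q - p / b) - (q - p)"
proof -
  have "(p - q) * g \<le> \<bar>p - q\<bar>"
  proof -
    have "(p - q) * g \<le> \<bar>(p - q) * g\<bar>" by (rule abs_ge_self)
    also have "\<dots> = \<bar>p - q\<bar> * \<bar>g\<bar>" by (rule abs_mult)
    also have "\<dots> \<le> \<bar>p - q\<bar>" using assms(6) by (simp add: mult_left_le)
    finally show ?thesis .
  qed
  also have "\<dots> \<le> 2 * (b / (b + 1)) * (q - p / b) - (q - p)"
  proof (cases "q \<le> p")
    case True
    have "0 \<le> q - p / b" using assms by (simp add: field_simps)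
    moreover have "0 \<le> b / (b+1)" using assms by simp
    ultimately have "0 \<le> 2 * (b / (b + 1)) * (q - p / b)" by (intro mult_nonneg_nonneg) auto
    then show ?thesis using True by simp
  next
    case False
    have e: "2 * (b / (b + 1)) * (q - p / b) = 2 * (b * q - p) / (b + 1)"
    proof -
      have "b * (q - p / b) = b * q - p" using assms by (simp add: right_diff_distrib)
      moreover have "2 * (b / (b + 1)) * (q - p / b) = 2 * (b * (q - p / b)) / (b + 1)" by simp
      ultimately show ?thesis by simp
    qed
    have h: "(q - p) * (b + 1) \<le> b * q - p" using assms(4)
      by (simp add: algebra_simps)
    have bp: "0 < b + 1" using assms by simp
    have "2 * (q - p) \<le> 2 * (b * q - p) / (b + 1)"
    proof -
      have "2 * (q - p) * (b + 1) \<le> 2 * (b * q - p)" unfolding mult.assoc by (rule mult_left_mono[OF h]) simp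
      then show ?thesis by (subst pos_le_divide_eq[OF bp])
    qed
    then show ?thesis using False unfolding e by simp
  qed
  finally show ?thesis .
qed

lemma TV_density_bound:
  fixes p q g :: "'a \<Rightarrow> real" and b :: real
  assumes [measurable]: "p \<in> borel_measurable M" "q \<in> borel_measurable M" "g \<in> borel_measurable M"
    and pn: "\<And>x. x \<in> space M \<Longrightarrow> 0 \<le> p x" and qn: "\<And>x. x \<in> space M \<Longrightarrow> 0 \<le> q x"
    and pint: "(\<integral>\<^sup>+x. ennreal (p x) \<partial>M) = 1" and qint: "(\<integral>\<^sup>+x. ennreal (q x) \<partial>M) = 1"
    and ae: "AE x in M. p x \<le> b * q x \<and> q x \<le> b * p x"
    and b: "1 \<le> b" and gb: "\<And>x. x \<in> space M \<Longrightarrow> \<bar>g x\<bar> \<le> 1"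
  shows "(\<integral>x. g x \<partial>density M p) - (\<integral>x. g x \<partial>density M q) \<le> 2 * ((b - 1) / (b + 1))"
proof -
  have ip: "integrable M p"
    by (rule integrableI_nonneg) (auto simp: pn pint intro!: AE_I2)
  have iq: "integrable M q"
    by (rule integrableI_nonneg) (auto simp: qn qint intro!: AE_I2)
  have Ip: "integral\<^sup>L M p = 1"
    using nn_integral_eq_integral[OF ip] pint pn by (simp add: AE_I2)
  have Iq: "integral\<^sup>L M q = 1"
    using nn_integral_eq_integral[OF iq] qint qn by (simp add: AE_I2)
  have ipg: "integrable M (\<lambda>x. p x * g x)"
    by (rule Bochner_Integration.integrable_bound[OF ip]) (auto intro!: AE_I2 simp: pn gb abs_mult mult_left_le)
  have iqg: "integrable M (\<lambda>x. q x * g x)"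
    by (rule Bochner_Integration.integrable_bound[OF iq]) (auto intro!: AE_I2 simp: qn gb abs_mult mult_left_le)
  define k where "k = b / (b + 1)"
  have "(\<integral>x. g x \<partial>density M p) - (\<integral>x. g x \<partial>density M q) = (\<integral>x. p x * g x \<partial>M) - (\<integral>x. q x * g x \<partial>M)"
    by (simp add: integral_density pn qn AE_I2)
  also have "\<dots> = (\<integral>x. (p x - q x) * g x \<partial>M)"
    using ipg iqg by (simp add: left_diff_distrib)
  also have "\<dots> \<le> (\<integral>x. 2 * k * (q x - p x / b) - (q x - p x) \<partial>M)"
  proof (rule integral_mono_AE)
    show "integrable M (\<lambda>x. (p x - q x) * g x)" using ipg iqg by (simp add: left_diff_distrib)
    show "integrable M (\<lambda>x. 2 * k * (q x - p x / b) - (q x - p x))" using ip iq by simp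
    show "AE x in M. (p x - q x) * g x \<le> 2 * k * (q x - p x / b) - (q x - p x)"
      using ae AE_space
    proof eventually_elim
      case (elim x)
      then show ?case unfolding k_def
        by (intro pointwise_tv) (auto simp: pn qn gb b)
    qed
  qed
  also have "\<dots> = 2 * k * (1 - 1 / b)"
    using ip iq Ip Iq by simp
  also have "\<dots> = 2 * ((b - 1) / (b + 1))"
  proof -
    have "b * (1 - 1 / b) = b - 1" using b by (simp add: right_diff_distrib)
    then show ?thesis unfolding k_def by (metis times_divide_eq_left mult.assoc mult.commute)
  qed
  finally show ?thesis .
qed

lemma tanh_sqrt_bound:
  fixes c :: real assumes c: "1 \<le> c"
  shows "(c^2 - 1) / (c^2 + 1) \<le> sqrt (ln c)"
proof (cases "1 \<le> ln c")
  case True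
  have p0: "0 < c^2 + 1" by (smt (verit) zero_le_power2)
  have "(c^2 - 1) / (c^2 + 1) \<le> 1" using p0 by (simp add: divide_le_eq)
  also have "1 \<le> sqrt (ln c)" using True by simp
  finally show ?thesis .
next
  case False
  have "c < exp 1" using False c by (metis exp_ln less_le_trans ln_less_cancel_iff not_le zero_less_one exp_gt_zero ln_exp)
  moreover have "exp 1 \<le> (3::real)" using exp_le by simp
  ultimately have c3: "c \<le> 3" by simp
  have lnlow: "1 - 1 / c \<le> ln c"
  proof -
    have "ln (1 / c) \<le> 1 / c - 1" using c by (intro ln_le_minus_one) simp
    then show ?thesis using c by (simp add: ln_div)
  qed
  have pos: "0 < c^2 + 1" by (smt (verit) zero_le_power2)
  have key: "c * (c - 1) * (c + 1)^2 \<le> (c^2 + 1)^2"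
  proof -
    define d where "d = c - 1"
    have d0: "0 \<le> d" "d \<le> 2" using c c3 by (auto simp: d_def)
    have "d * d \<le> 2 * 2" using d0 by (intro mult_mono) auto
    then have "d * (d * d) \<le> d * (2 * 2)" using d0 by (intro mult_left_mono) auto
    then have "d^3 \<le> 4 * d" by (simp add: power3_eq_cube mult.assoc)
    then have "0 \<le> 4 + 4 * d - d^3" by simp
    moreover have "(c^2 + 1)^2 - c * (c - 1) * (c + 1)^2 = 4 + 4 * d - d^3"
      by (simp add: d_def power2_eq_square power3_eq_cube algebra_simps)
    ultimately show ?thesis by simp
  qed
  have sq: "((c^2 - 1) / (c^2 + 1))^2 \<le> 1 - 1 / c"
  proof -
    have "((c^2 - 1) / (c^2 + 1))^2 = (c^2 - 1)^2 / (c^2 + 1)^2" by (simp add: power_divide)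
    also have "\<dots> \<le> (c - 1) / c"
    proof -
      have "(c^2 - 1)^2 * c = (c - 1) * (c * (c - 1) * (c + 1)^2)"
        by (simp add: power2_eq_square algebra_simps)
      also have "\<dots> \<le> (c - 1) * (c^2 + 1)^2" using key c by (intro mult_left_mono) auto
      finally have "(c^2 - 1)^2 * c \<le> (c - 1) * (c^2 + 1)^2" .
      then show ?thesis using c pos by (simp add: divide_le_eq le_divide_eq)
    qed
    also have "\<dots> = 1 - 1 / c" using c by (simp add: field_simps)
    finally show ?thesis .
  qed
  show ?thesis by (rule real_le_rsqrt) (use sq lnlow in linarith)
qed

lemma KL_distr:
  assumes sfQ: "sigma_finite_measure Q" and sets: "sets P = sets Q"
    and ac: "absolutely_continuous Q P"
    and T: "T \<in> measurable Q M'" and T': "T' \<in> measurable M' Q"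
    and inv: "\<forall>x\<in>space Q. T' (T x) = x"
  shows "KL (distr P M' T) (distr Q M' T) = KL P Q"
proof -
  interpret Q: sigma_finite_measure Q by fact
  have TP: "T \<in> measurable P M'" using T sets by (simp cong: measurable_cong_sets)
  have spP: "space P = space Q" using sets by (rule sets_eq_imp_space_eq)
  have ac': "absolutely_continuous (distr Q M' T) (distr P M' T)"
    unfolding absolutely_continuous_def
  proof
    fix A assume "A \<in> null_sets (distr Q M' T)"
    then have A: "A \<in> sets M'" "emeasure Q (T -` A \<inter> space Q) = 0"
      using T by (auto simp: null_sets_def emeasure_distr)
    have "T -` A \<inter> space Q \<in> sets Q" using T A(1) by (rule measurable_sets)
    then have "T -` A \<inter> space Q \<in> null_sets P"
      using ac A(2) unfolding absolutely_continuous_def by (auto simp: null_sets_def)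
    then show "A \<in> null_sets (distr P M' T)"
      using TP A(1) by (auto simp: null_sets_def emeasure_distr spP)
  qed
  have rn: "AE x in Q. RN_deriv (distr Q M' T) (distr P M' T) (T x) = RN_deriv Q P x"
    by (rule Q.RN_deriv_distr[OF T T' inv ac' sets])
  have rnP: "AE x in P. RN_deriv (distr Q M' T) (distr P M' T) (T x) = RN_deriv Q P x"
    by (rule absolutely_continuous_AE[OF sets ac rn])
  have meas: "entropy_density (exp 1) (distr Q M' T) (distr P M' T) \<in> borel_measurable M'"
    using measurable_entropy_density[of "exp 1" "distr Q M' T" "distr P M' T"]
    by (simp cong: measurable_cong_sets)
  have "KL (distr P M' T) (distr Q M' T) =
      integral\<^sup>L P (\<lambda>x. entropy_density (exp 1) (distr Q M' T) (distr P M' T) (T x))"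
    unfolding KL_def KL_divergence_def by (rule integral_distr[OF TP meas])
  also have "\<dots> = integral\<^sup>L P (entropy_density (exp 1) Q P)"
    apply (rule integral_cong_AE)
    using meas TP apply measurable
    using measurable_entropy_density[of "exp 1" Q P] sets apply (simp cong: measurable_cong_sets)
    using rnP by eventually_elim (simp add: entropy_density_def)
  finally show ?thesis unfolding KL_def KL_divergence_def .
qed

lemma section_lemma:
  fixes F px W :: "'x \<Rightarrow> real" and A c :: real
  assumes [measurable]: "F \<in> borel_measurable MX" "px \<in> borel_measurable MX" "W \<in> borel_measurable MX"
    and Fn: "\<And>x. x \<in> space MX \<Longrightarrow> 0 \<le> F x"
    and pxn: "\<And>x. x \<in> space MX \<Longrightarrow> 0 \<le> px x"
    and Wn: "\<And>x. x \<in> space MX \<Longrightarrow> 0 \<le> W x"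
    and pxint: "(\<integral>\<^sup>+x. ennreal (px x) \<partial>MX) = 1"
    and A0: "0 \<le> A" and Aint: "ennreal A = (\<integral>\<^sup>+x. ennreal (F x) \<partial>MX)"
    and null: "AE x in MX. px x = 0 \<longrightarrow> F x = 0"
    and bnd: "\<And>x. x \<in> space MX \<Longrightarrow> 0 < px x \<Longrightarrow> px x / c \<le> W x * F x \<and> W x * F x \<le> c * px x"
    and c: "1 \<le> c"
  defines "Z \<equiv> enn2real (\<integral>\<^sup>+x. ennreal (W x * (F x / A)) \<partial>MX)"
  shows "0 < A"
    and "AE x in MX. W x * (F x / A) / Z * A \<le> c^2 * (px x * A) \<and> px x * A \<le> c^2 * (W x * (F x / A) / Z * A)"
    and "(\<integral>\<^sup>+x. ennreal (W x * (F x / A) / Z * A) \<partial>MX) = ennreal A"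
    and "\<And>x. x \<in> space MX \<Longrightarrow> 0 \<le> W x * (F x / A) / Z * A"
proof -
  define H where "H x = W x * F x" for x
  have [measurable]: "H \<in> borel_measurable MX" unfolding H_def by measurable
  have c0: "0 < c" using c by simp
  have Hb: "AE x in MX. px x / c \<le> H x \<and> H x \<le> c * px x"
    using null AE_space
  proof eventually_elim
    case (elim x)
    show ?case
    proof (cases "px x = 0")
      case True then show ?thesis using elim by (simp add: H_def)
    next
      case False then have "0 < px x" using pxn elim by (simp add: order_less_le)
      then show ?thesis using bnd elim by (simp add: H_def)
    qed
  qed
  show Apos: "0 < A"
  proof (rule ccontr)
    assume "\<not> 0 < A"
    then have "A = 0" using A0 by simp
    then have "(\<integral>\<^sup>+x. ennreal (F x) \<partial>MX) = 0" using Aint by simp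
    then have "AE x in MX. ennreal (F x) = 0" by (subst (asm) nn_integral_0_iff_AE) auto
    then have "AE x in MX. ennreal (px x) = 0"
      using Hb AE_space
    proof eventually_elim
      case (elim x)
      then have "F x \<le> 0" by (simp add: ennreal_eq_0_iff)
      then have "F x = 0" using Fn elim by (simp add: order_antisym)
      then have "px x / c \<le> 0" using elim by (simp add: H_def)
      then have "px x \<le> 0" using c0 by (simp add: divide_le_0_iff)
      then show ?case by (simp add: ennreal_eq_0_iff)
    qed
    then have "(\<integral>\<^sup>+x. ennreal (px x) \<partial>MX) = 0" by (subst nn_integral_0_iff_AE) auto
    then show False using pxint by simp
  qed
  define I where "I = (\<integral>\<^sup>+x. ennreal (W x * (F x / A)) \<partial>MX)"
  have Ieq: "I = (\<integral>\<^sup>+x. ennreal (H x / A) \<partial>MX)"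
    unfolding I_def H_def by (simp add: times_divide_eq_right)
  have Iup: "I \<le> ennreal (c / A)"
  proof -
    have "I \<le> (\<integral>\<^sup>+x. ennreal (c / A) * ennreal (px x) \<partial>MX)"
      unfolding Ieq
    proof (rule nn_integral_mono_AE)
      show "AE x in MX. ennreal (H x / A) \<le> ennreal (c / A) * ennreal (px x)"
        using Hb AE_space
      proof eventually_elim
        case (elim x)
        have "H x / A \<le> c * px x / A" using elim Apos by (simp add: divide_right_mono)
        also have "\<dots> = c / A * px x" by simp
        finally have "ennreal (H x / A) \<le> ennreal (c / A * px x)" by (rule ennreal_leI)
        also have "\<dots> = ennreal (c / A) * ennreal (px x)" using c0 Apos by (intro ennreal_mult') simp
        finally show ?case .
      qed
    qed
    also have "\<dots> = ennreal (c / A)" by (simp add: nn_integral_cmult pxint)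
    finally show ?thesis .
  qed
  have Ilow: "ennreal (1 / (c * A)) \<le> I"
  proof -
    have "ennreal (1 / (c * A)) = (\<integral>\<^sup>+x. ennreal (1 / (c * A)) * ennreal (px x) \<partial>MX)"
      by (simp add: nn_integral_cmult pxint)
    also have "\<dots> \<le> I"
      unfolding Ieq
    proof (rule nn_integral_mono_AE)
      show "AE x in MX. ennreal (1 / (c * A)) * ennreal (px x) \<le> ennreal (H x / A)"
        using Hb AE_space
      proof eventually_elim
        case (elim x)
        have "1 / (c * A) * px x = px x / c / A" by simp
        also have "\<dots> \<le> H x / A" by (rule divide_right_mono) (use elim Apos in auto)
        finally have "ennreal (1 / (c * A) * px x) \<le> ennreal (H x / A)" by (rule ennreal_leI)
        moreover have "ennreal (1 / (c * A) * px x) = ennreal (1 / (c * A)) * ennreal (px x)" using c0 Apos by (intro ennreal_mult') simp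
        ultimately show ?case by simp
      qed
    qed
    finally show ?thesis .
  qed
  have Ifin: "I < top" using Iup by (simp add: le_less_trans)
  have ZI: "ennreal Z = I" unfolding Z_def I_def[symmetric] using Ifin by simp
  have Z0: "0 \<le> Z" unfolding Z_def by simp
  have Zlow: "1 / (c * A) \<le> Z" using Ilow unfolding ZI[symmetric] using Z0 by (simp add: ennreal_le_iff)
  have Zup: "Z \<le> c / A" using Iup unfolding ZI[symmetric] using c0 Apos by (simp add: ennreal_le_iff)
  define Y where "Y = Z * A"
  have Ylow: "1 / c \<le> Y"
  proof -
    have e1: "1 / (c * A) * A = 1 / c" using Apos by simp
    have "1 / (c * A) * A \<le> Z * A" using Zlow Apos by (intro mult_right_mono) auto
    then show ?thesis unfolding Y_def by (metis e1)
  qed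
  have Yup: "Y \<le> c"
  proof -
    have e1: "c / A * A = c" using Apos by simp
    have "Z * A \<le> c / A * A" using Zup Apos by (intro mult_right_mono) auto
    then show ?thesis unfolding Y_def by (metis e1)
  qed
  have Ypos: "0 < Y" using Ylow c0 by (metis less_le_trans zero_less_divide_1_iff)
  have Zpos: "0 < Z" using Ypos Apos by (simp add: Y_def zero_less_mult_iff)
  have Qeq: "\<And>x. W x * (F x / A) / Z * A = H x * (A / Y)"
    using Apos Zpos by (simp add: H_def Y_def field_simps)
  have AY1: "A / Y \<le> c * A"
  proof -
    have "A / Y = A * (1 / Y)" by simp
    also have "1 / Y \<le> c" using Ylow Ypos c0 by (simp add: divide_le_eq mult.commute)
    then have "A * (1 / Y) \<le> A * c" using Apos by (intro mult_left_mono) auto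
    finally show ?thesis by (simp add: mult.commute)
  qed
  have AY2: "A / c \<le> A / Y" using Yup Ypos Apos by (simp add: divide_left_mono)
  show "AE x in MX. W x * (F x / A) / Z * A \<le> c^2 * (px x * A) \<and> px x * A \<le> c^2 * (W x * (F x / A) / Z * A)"
    using Hb AE_space
  proof eventually_elim
    case (elim x)
    have p0: "0 \<le> px x" using pxn elim by simp
    have h0: "0 \<le> H x" using elim p0 c0 by (meson divide_nonneg_pos order_trans)
    have m1: "H x * (A / Y) \<le> (c * px x) * (c * A)"
      using elim AY1 h0 Apos Ypos by (intro mult_mono) auto
    have m2: "(px x / c) * (A / c) \<le> H x * (A / Y)"
      using elim AY2 p0 Apos c0 Ypos h0 by (intro mult_mono) auto
    have "H x * (A / Y) \<le> (c * px x) * (c * A)" by (rule m1)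
    also have "\<dots> = c^2 * (px x * A)" by (simp add: power2_eq_square ac_simps)
    finally have u1: "H x * (A / Y) \<le> c^2 * (px x * A)" .
    have "px x * A = c^2 * ((px x / c) * (A / c))" using c0 by (simp add: power2_eq_square field_simps)
    also have "\<dots> \<le> c^2 * (H x * (A / Y))" by (rule mult_left_mono[OF m2]) simp
    finally have u2: "px x * A \<le> c^2 * (H x * (A / Y))" .
    show ?case unfolding Qeq using u1 u2 by blast
  qed
  show "\<And>x. x \<in> space MX \<Longrightarrow> 0 \<le> W x * (F x / A) / Z * A"
    using Fn Wn Apos Zpos by simp
  have "(\<integral>\<^sup>+x. ennreal (W x * (F x / A) / Z * A) \<partial>MX) = (\<integral>\<^sup>+x. ennreal (W x * (F x / A)) * ennreal (A / Z) \<partial>MX)"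
  proof (rule nn_integral_cong)
    fix x assume x: "x \<in> space MX"
    have e: "W x * (F x / A) / Z * A = (W x * (F x / A)) * (A / Z)" by simp
    show "ennreal (W x * (F x / A) / Z * A) = ennreal (W x * (F x / A)) * ennreal (A / Z)"
      unfolding e using Fn[OF x] Wn[OF x] Apos Zpos by (intro ennreal_mult) auto
  qed
  also have "\<dots> = I * ennreal (A / Z)" unfolding I_def by (rule nn_integral_multc) measurable
  also have "\<dots> = ennreal (Z * (A / Z))" unfolding ZI[symmetric] using Zpos Apos by (intro ennreal_mult[symmetric]) auto
  also have "\<dots> = ennreal A" using Zpos by simp
  finally show "(\<integral>\<^sup>+x. ennreal (W x * (F x / A) / Z * A) \<partial>MX) = ennreal A" .
qed

lemma ratio_facts:
  fixes a a' G :: real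
  assumes a: "0 \<le> a" and G: "1 \<le> G" and l: "inverse G \<le> a' / a" and u: "a' / a \<le> G"
  shows "0 < a" "0 < a'" "inverse G \<le> a / a'" "a / a' \<le> G"
proof -
  have iG: "0 < inverse G" using G by simp
  then have r: "0 < a' / a" using l by linarith
  then show a0: "0 < a" using a by (cases "a = 0") auto
  show a1: "0 < a'" using r a0 by (simp add: zero_less_divide_iff)
  have e: "a / a' = inverse (a' / a)" by simp
  show "inverse G \<le> a / a'" unfolding e using u r by (rule le_imp_inverse_le)
  have "inverse (a' / a) \<le> inverse (inverse G)" using l iG by (rule le_imp_inverse_le)
  then show "a / a' \<le> G" unfolding e by simp
qed

lemma prod_bounds:
  fixes u v G H :: real
  assumes "inverse G \<le> u" "u \<le> G" "inverse H \<le> v" "v \<le> H" "0 < G" "0 < H"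
  shows "inverse (G * H) \<le> u * v" "u * v \<le> G * H"
proof -
  have iG: "0 < inverse G" "0 < inverse H" using assms by auto
  have u0: "0 \<le> u" "0 \<le> v" using assms iG by linarith+
  have "inverse G * inverse H \<le> u * v" using assms iG u0 by (intro mult_mono) auto
  then show "inverse (G * H) \<le> u * v" by (simp add: inverse_mult_distrib)
  show "u * v \<le> G * H" using assms u0 by (intro mult_mono) auto
qed

lemma ac_density_le:
  fixes p q :: "'a \<Rightarrow> real"
  assumes [measurable]: "p \<in> borel_measurable M" "q \<in> borel_measurable M"
    and qn: "\<And>x. x \<in> space M \<Longrightarrow> 0 \<le> q x" and b: "0 \<le> b"
    and ae: "AE x in M. p x \<le> b * q x"
  shows "absolutely_continuous (density M q) (density M p)"
  unfolding absolutely_continuous_def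
proof
  fix A assume "A \<in> null_sets (density M q)"
  then have A: "A \<in> sets M" "AE x in M. x \<in> A \<longrightarrow> ennreal (q x) = 0"
    by (auto simp: null_sets_density_iff)
  have "AE x in M. x \<in> A \<longrightarrow> ennreal (p x) = 0"
    using A(2) ae AE_space
  proof eventually_elim
    case (elim x)
    show ?case
    proof
      assume "x \<in> A"
      then have "q x \<le> 0" using elim by (simp add: ennreal_eq_0_iff)
      then have "q x = 0" using qn elim by (simp add: order_antisym)
      then have "p x \<le> 0" using elim by simp
      then show "ennreal (p x) = 0" by (simp add: ennreal_eq_0_iff)
    qed
  qed
  then show "A \<in> null_sets (density M p)" using A by (auto simp: null_sets_density_iff)
qed
theorem mainTheorem4:
  fixes MX :: "'x measure" and MR :: "'r measure"
    and f :: "'x \<times> (bool \<times> real) \<Rightarrow> real"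
    and \<pi>t :: "'x \<Rightarrow> 'a" and \<pi>z :: "'x \<Rightarrow> 'b"
    and e e\<eta> :: "bool \<Rightarrow> 'a \<Rightarrow> real" and \<phi> \<phi>\<eta> :: "real \<Rightarrow> 'b \<Rightarrow> real"
    and \<Gamma>t \<Gamma>z :: real and \<Phi> :: "'x \<Rightarrow> 'r"
  assumes sf: "sigma_finite_measure MX"
    and f_meas: "f \<in> borel_measurable (MX \<Otimes>\<^sub>M TZ)"
    and f_nonneg: "\<And>y. y \<in> space (MX \<Otimes>\<^sub>M TZ) \<Longrightarrow> 0 \<le> f y"
    and f_prob: "(\<integral>\<^sup>+ y. ennreal (f y) \<partial>(MX \<Otimes>\<^sub>M TZ)) = 1"
    and overlap: "\<And>x t z. x \<in> space MX \<Longrightarrow> z \<in> {0..1} \<Longrightarrow> 0 < marg_x MX f x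
        \<Longrightarrow> 0 < post_tz MX f x (t, z)"
    and e_pmf: "\<And>x t. x \<in> space MX \<Longrightarrow> 0 \<le> e t (\<pi>t x)"
    and e_sum: "\<And>x. x \<in> space MX \<Longrightarrow> e True (\<pi>t x) + e False (\<pi>t x) = 1"
    and \<phi>_dens: "\<And>x z. x \<in> space MX \<Longrightarrow> z \<in> {0..1} \<Longrightarrow> 0 \<le> \<phi> z (\<pi>z x)"
    and \<phi>_int: "\<And>x. x \<in> space MX \<Longrightarrow>
        (\<integral>\<^sup>+ z. ennreal (\<phi> z (\<pi>z x)) \<partial>(restrict_space lborel {0..1})) = 1"
    and factorized: "\<And>x t z. x \<in> space MX \<Longrightarrow> z \<in> {0..1} \<Longrightarrow> 0 < marg_x MX f x
        \<Longrightarrow> post_tz MX f x (t, z) = \<phi> z (\<pi>z x) * e t (\<pi>t x)"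
    and e\<eta>_meas: "(\<lambda>(x, t, z). e\<eta> t (\<pi>t x)) \<in> borel_measurable (MX \<Otimes>\<^sub>M TZ)"
    and \<phi>\<eta>_meas: "(\<lambda>(x, t, z). \<phi>\<eta> z (\<pi>z x)) \<in> borel_measurable (MX \<Otimes>\<^sub>M TZ)"
    and \<Gamma>t_ge: "1 \<le> \<Gamma>t" and \<Gamma>z_ge: "1 \<le> \<Gamma>z"
    and odds_t: "\<And>x t. x \<in> space MX \<Longrightarrow>
        inverse \<Gamma>t \<le> e\<eta> t (\<pi>t x) / e t (\<pi>t x) \<and> e\<eta> t (\<pi>t x) / e t (\<pi>t x) \<le> \<Gamma>t"
    and odds_z: "\<And>x z. x \<in> space MX \<Longrightarrow> z \<in> {0..1} \<Longrightarrow>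
        inverse \<Gamma>z \<le> \<phi>\<eta> z (\<pi>z x) / \<phi> z (\<pi>z x) \<and> \<phi>\<eta> z (\<pi>z x) / \<phi> z (\<pi>z x) \<le> \<Gamma>z"
    and \<Phi>_meas: "\<Phi> \<in> MX \<rightarrow>\<^sub>M MR"
    and \<Phi>_inv: "\<exists>\<Psi> \<in> MR \<rightarrow>\<^sub>M MX. \<forall>x \<in> space MX. \<Psi> (\<Phi> x) = x"
  defines "w \<equiv> (\<lambda>(t, z) x. 1 / (\<phi>\<eta> z (\<pi>z x) * e\<eta> t (\<pi>t x)))"
  shows "KL (P_meas MX f) (Q_meas MX f w) = KL (P_Phi MX MR \<Phi> f) (Q_Phi MX MR \<Phi> f w)
      \<and> KL (P_Phi MX MR \<Phi> f) (Q_Phi MX MR \<Phi> f w) \<le> 2 * (ln \<Gamma>t + ln \<Gamma>z)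
      \<and> tv_dist (P_Phi MX MR \<Phi> f) (Q_Phi MX MR \<Phi> f w) \<le> sqrt (ln \<Gamma>t + ln \<Gamma>z)"
proof -
  interpret MX: sigma_finite_measure MX by (rule sf)
  have sfTZ: "sigma_finite_measure TZ"
    unfolding TZ_def
  proof (rule sigma_finite_pair_measure)
    show "sigma_finite_measure (count_space (UNIV :: bool set))"
      by (rule sigma_finite_measure_count_space_countable) simp
    show "sigma_finite_measure (restrict_space lborel {0..(1::real)})"
      by (rule sigma_finite_measure_restrict_space) (simp_all add: sigma_finite_lborel)
  qed
  interpret TZ: sigma_finite_measure TZ by (rule sfTZ)
  interpret PS: pair_sigma_finite MX TZ ..
  have spTZ: "space TZ = UNIV \<times> {0..1}" by (simp add: TZ_def space_pair_measure)
  note [measurable] = f_meas e\<eta>_meas \<phi>\<eta>_meas \<Phi>_meas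
  define px where "px = marg_x MX f"
  define pt where "pt = marg_tz MX f"
  define c where "c = \<Gamma>t * \<Gamma>z"
  define b where "b = c^2"
  have c1: "1 \<le> c" unfolding c_def using \<Gamma>t_ge \<Gamma>z_ge by (metis mult_mono' mult_1 zero_le_one)
  have px_meas[measurable]: "px \<in> borel_measurable MX"
    unfolding px_def marg_x_def by measurable
  have pt_meas[measurable]: "pt \<in> borel_measurable TZ"
    unfolding pt_def marg_tz_def by measurable
  have px0: "\<And>x. 0 \<le> px x" by (simp add: px_def marg_x_def)
  have pt0: "\<And>tz. 0 \<le> pt tz" by (simp add: pt_def marg_tz_def)
  define Wf where "Wf = (\<lambda>y. 1 / ((\<lambda>(x, t, z). \<phi>\<eta> z (\<pi>z x)) y * (\<lambda>(x, t, z). e\<eta> t (\<pi>t x)) y))"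
  have Wf_meas[measurable]: "Wf \<in> borel_measurable (MX \<Otimes>\<^sub>M TZ)" unfolding Wf_def by measurable
  have wWf: "\<And>tz x. w tz x = Wf (x, tz)" by (auto simp: w_def Wf_def split: prod.splits)
  have pw: "0 < \<phi> z (\<pi>z x) \<and> 0 < e t (\<pi>t x) \<and> 0 < w (t, z) x
      \<and> inverse c \<le> \<phi> z (\<pi>z x) * e t (\<pi>t x) * w (t, z) x
      \<and> \<phi> z (\<pi>z x) * e t (\<pi>t x) * w (t, z) x \<le> c"
    if x: "x \<in> space MX" and z: "z \<in> {0..1}" for x t z
  proof -
    note rz = ratio_facts[OF \<phi>_dens[OF x z] \<Gamma>z_ge odds_z[OF x z, THEN conjunct1] odds_z[OF x z, THEN conjunct2]]
    note rt = ratio_facts[OF e_pmf[OF x] \<Gamma>t_ge odds_t[OF x, of t, THEN conjunct1] odds_t[OF x, of t, THEN conjunct2]]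
    have pb: "inverse (\<Gamma>z * \<Gamma>t) \<le> (\<phi> z (\<pi>z x) / \<phi>\<eta> z (\<pi>z x)) * (e t (\<pi>t x) / e\<eta> t (\<pi>t x))"
         "(\<phi> z (\<pi>z x) / \<phi>\<eta> z (\<pi>z x)) * (e t (\<pi>t x) / e\<eta> t (\<pi>t x)) \<le> \<Gamma>z * \<Gamma>t"
      using prod_bounds[OF rz(3) rz(4) rt(3) rt(4)] \<Gamma>z_ge \<Gamma>t_ge by auto
    have eq: "\<phi> z (\<pi>z x) * e t (\<pi>t x) * w (t, z) x = (\<phi> z (\<pi>z x) / \<phi>\<eta> z (\<pi>z x)) * (e t (\<pi>t x) / e\<eta> t (\<pi>t x))"
      by (simp add: w_def)
    have "0 < w (t, z) x" using rz(2) rt(2) by (simp add: w_def)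
    then show ?thesis using rz(1) rt(1) pb unfolding eq c_def by (simp add: mult.commute)
  qed
  have fact: "f (x, (t, z)) = \<phi> z (\<pi>z x) * e t (\<pi>t x) * px x"
    if x: "x \<in> space MX" and z: "z \<in> {0..1}" and p: "0 < px x" for x t z
  proof -
    have "f (x, (t, z)) / px x = \<phi> z (\<pi>z x) * e t (\<pi>t x)"
      using factorized[OF x z] p by (simp add: post_tz_def px_def)
    then show ?thesis using p by (simp add: field_simps)
  qed
  have fn: "\<And>x tz. x \<in> space MX \<Longrightarrow> tz \<in> space TZ \<Longrightarrow> 0 \<le> f (x, tz)"
    using f_nonneg by (simp add: space_pair_measure)
  have int1: "(\<integral>\<^sup>+x. (\<integral>\<^sup>+tz. ennreal (f (x, tz)) \<partial>TZ) \<partial>MX) = 1"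
    using TZ.nn_integral_fst[of "\<lambda>y. ennreal (f y)" MX] f_prob by simp
  have int2: "(\<integral>\<^sup>+tz. (\<integral>\<^sup>+x. ennreal (f (x, tz)) \<partial>MX) \<partial>TZ) = 1"
    using PS.nn_integral_snd[of "\<lambda>y. ennreal (f y)"] f_prob by simp
  have aex: "AE x in MX. ennreal (px x) = (\<integral>\<^sup>+tz. ennreal (f (x, tz)) \<partial>TZ)"
  proof -
    have "AE x in MX. (\<integral>\<^sup>+tz. ennreal (f (x, tz)) \<partial>TZ) \<noteq> \<infinity>"
      by (rule nn_integral_PInf_AE) (simp_all add: int1)
    then show ?thesis
      by (rule eventually_mono) (simp add: px_def marg_x_def less_top)
  qed
  have aet: "AE tz in TZ. ennreal (pt tz) = (\<integral>\<^sup>+x. ennreal (f (x, tz)) \<partial>MX)"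
  proof -
    have "AE tz in TZ. (\<integral>\<^sup>+x. ennreal (f (x, tz)) \<partial>MX) \<noteq> \<infinity>"
      by (rule nn_integral_PInf_AE) (simp_all add: int2)
    then show ?thesis
      by (rule eventually_mono) (simp add: pt_def marg_tz_def less_top)
  qed
  have pxint: "(\<integral>\<^sup>+x. ennreal (px x) \<partial>MX) = 1"
    using int1 aex by (simp add: nn_integral_cong_AE)
  have ptint: "(\<integral>\<^sup>+tz. ennreal (pt tz) \<partial>TZ) = 1"
    using int2 aet by (simp add: nn_integral_cong_AE)
  have null1: "AE x in MX. AE tz in TZ. px x = 0 \<longrightarrow> f (x, tz) = 0"
    using aex AE_space
  proof eventually_elim
    case (elim x)
    show ?case
    proof (cases "px x = 0")
      case True
      then have "(\<integral>\<^sup>+tz. ennreal (f (x, tz)) \<partial>TZ) = 0" using elim by simp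
      then have "AE tz in TZ. ennreal (f (x, tz)) = 0"
        using elim by (subst (asm) nn_integral_0_iff_AE) (auto intro: measurable_compose_Pair1)
      then show ?thesis using AE_space
        by eventually_elim (use elim fn in \<open>auto simp: ennreal_eq_0_iff intro: order_antisym\<close>)
    qed simp
  qed
  have null2: "AE tz in TZ. AE x in MX. px x = 0 \<longrightarrow> f (x, tz) = 0"
    using null1 by (subst (asm) PS.AE_commute) measurable
  define q where "q = (\<lambda>(x, tz). q_eta MX f w tz x * marg_tz MX f tz)"
  define p where "p = (\<lambda>(x, tz). px x * pt tz)"
  define Zf where "Zf tz = enn2real (\<integral>\<^sup>+x'. ennreal (Wf (x', tz) * (f (x', tz) / pt tz)) \<partial>MX)" for tz
  have Zf_meas[measurable]: "Zf \<in> borel_measurable TZ" unfolding Zf_def by measurable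
  have qeq: "q (x, tz) = w tz x * (f (x, tz) / pt tz) / enn2real (\<integral>\<^sup>+x'. ennreal (w tz x' * (f (x', tz) / pt tz)) \<partial>MX) * pt tz" for x tz
    by (simp add: q_def q_eta_def cond_x_def pt_def)
  have qeq2: "q y = Wf y * (f y / pt (snd y)) / Zf (snd y) * pt (snd y)" for y
    by (cases y) (simp add: qeq wWf Zf_def)
  have q_meas[measurable]: "q \<in> borel_measurable (MX \<Otimes>\<^sub>M TZ)"
    unfolding qeq2[abs_def] by measurable
  have p_meas[measurable]: "p \<in> borel_measurable (MX \<Otimes>\<^sub>M TZ)"
    unfolding p_def by measurable
  have sec: "(AE x in MX. q (x, tz) \<le> c^2 * p (x, tz) \<and> p (x, tz) \<le> c^2 * q (x, tz))
      \<and> (\<integral>\<^sup>+x. ennreal (q (x, tz)) \<partial>MX) = ennreal (pt tz)"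
    if tz: "tz \<in> space TZ" and A: "ennreal (pt tz) = (\<integral>\<^sup>+x. ennreal (f (x, tz)) \<partial>MX)"
      and nl: "AE x in MX. px x = 0 \<longrightarrow> f (x, tz) = 0" for tz
  proof -
    obtain t z where tz2: "tz = (t, z)" and z: "z \<in> {0..1}" using tz spTZ by (cases tz) auto
    have Fm: "(\<lambda>x. f (x, tz)) \<in> borel_measurable MX"
      using measurable_compose[OF measurable_Pair2'[OF tz] f_meas] by simp
    have Wm: "(\<lambda>x. w tz x) \<in> borel_measurable MX"
      using measurable_compose[OF measurable_Pair2'[OF tz] Wf_meas] by (simp add: wWf)
    have Wn: "\<And>x. x \<in> space MX \<Longrightarrow> 0 \<le> w tz x"
      using pw z unfolding tz2 by (simp add: less_imp_le)
    have bnd: "px x / c \<le> w tz x * f (x, tz) \<and> w tz x * f (x, tz) \<le> c * px x"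
      if x: "x \<in> space MX" and pp: "0 < px x" for x
    proof -
      have e: "w tz x * f (x, tz) = (\<phi> z (\<pi>z x) * e t (\<pi>t x) * w (t, z) x) * px x"
        unfolding tz2 using fact[OF x z pp] by simp
      have R: "inverse c \<le> \<phi> z (\<pi>z x) * e t (\<pi>t x) * w (t, z) x"
              "\<phi> z (\<pi>z x) * e t (\<pi>t x) * w (t, z) x \<le> c"
        using pw[OF x z] by auto
      have "px x / c = inverse c * px x" by (simp add: divide_inverse mult.commute)
      also have "\<dots> \<le> (\<phi> z (\<pi>z x) * e t (\<pi>t x) * w (t, z) x) * px x"
        using R(1) pp by (intro mult_right_mono) auto
      finally have l: "px x / c \<le> w tz x * f (x, tz)" unfolding e .
      have "(\<phi> z (\<pi>z x) * e t (\<pi>t x) * w (t, z) x) * px x \<le> c * px x"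
        using R(2) pp by (intro mult_right_mono) auto
      then show ?thesis using l unfolding e by simp
    qed
    note S = section_lemma[OF Fm px_meas Wm fn[OF _ tz] px0 Wn pxint pt0 A nl bnd c1]
    show ?thesis
      using S(2,3) unfolding qeq p_def by simp
  qed
  have aeT: "AE tz in TZ. (AE x in MX. q (x, tz) \<le> c^2 * p (x, tz) \<and> p (x, tz) \<le> c^2 * q (x, tz))
      \<and> (\<integral>\<^sup>+x. ennreal (q (x, tz)) \<partial>MX) = ennreal (pt tz)"
    using aet null2 AE_space by eventually_elim (rule sec)
  have aeM: "AE y in MX \<Otimes>\<^sub>M TZ. q y \<le> b * p y \<and> p y \<le> b * q y"
  proof -
    have "AE tz in TZ. AE x in MX. q (x, tz) \<le> c^2 * p (x, tz) \<and> p (x, tz) \<le> c^2 * q (x, tz)"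
      using aeT by (rule eventually_mono) simp
    then have "AE x in MX. AE tz in TZ. q (x, tz) \<le> c^2 * p (x, tz) \<and> p (x, tz) \<le> c^2 * q (x, tz)"
      by (subst PS.AE_commute) measurable
    then show ?thesis unfolding b_def by (intro PS.AE_pair_measure) measurable
  qed
  have qint: "(\<integral>\<^sup>+y. ennreal (q y) \<partial>(MX \<Otimes>\<^sub>M TZ)) = 1"
  proof -
    have "(\<integral>\<^sup>+y. ennreal (q y) \<partial>(MX \<Otimes>\<^sub>M TZ)) = (\<integral>\<^sup>+tz. (\<integral>\<^sup>+x. ennreal (q (x, tz)) \<partial>MX) \<partial>TZ)"
      by (rule PS.nn_integral_snd[symmetric]) measurable
    also have "\<dots> = (\<integral>\<^sup>+tz. ennreal (pt tz) \<partial>TZ)"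
      using aeT by (intro nn_integral_cong_AE) (auto elim: eventually_mono)
    finally show ?thesis using ptint by simp
  qed
  have pint: "(\<integral>\<^sup>+y. ennreal (p y) \<partial>(MX \<Otimes>\<^sub>M TZ)) = 1"
  proof -
    have "(\<integral>\<^sup>+y. ennreal (p y) \<partial>(MX \<Otimes>\<^sub>M TZ)) = (\<integral>\<^sup>+tz. (\<integral>\<^sup>+x. ennreal (p (x, tz)) \<partial>MX) \<partial>TZ)"
      by (rule PS.nn_integral_snd[symmetric]) measurable
    also have "\<dots> = (\<integral>\<^sup>+tz. ennreal (pt tz) * (\<integral>\<^sup>+x. ennreal (px x) \<partial>MX) \<partial>TZ)"
    proof (rule nn_integral_cong)
      fix tz
      have "(\<integral>\<^sup>+x. ennreal (p (x, tz)) \<partial>MX) = (\<integral>\<^sup>+x. ennreal (pt tz) * ennreal (px x) \<partial>MX)"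
        by (rule nn_integral_cong) (simp add: p_def px0 pt0 ennreal_mult mult.commute)
      also have "\<dots> = ennreal (pt tz) * (\<integral>\<^sup>+x. ennreal (px x) \<partial>MX)"
        by (rule nn_integral_cmult) measurable
      finally show "(\<integral>\<^sup>+x. ennreal (p (x, tz)) \<partial>MX) = ennreal (pt tz) * (\<integral>\<^sup>+x. ennreal (px x) \<partial>MX)" .
    qed
    finally show ?thesis using ptint pxint by simp
  qed
  have pn: "\<And>y. y \<in> space (MX \<Otimes>\<^sub>M TZ) \<Longrightarrow> 0 \<le> p y"
    by (auto simp: p_def px0 pt0)
  have qn: "\<And>y. y \<in> space (MX \<Otimes>\<^sub>M TZ) \<Longrightarrow> 0 \<le> q y"
  proof -
    fix y assume y: "y \<in> space (MX \<Otimes>\<^sub>M TZ)"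
    obtain x t z where yy: "y = (x, (t, z))" and x: "x \<in> space MX" and z: "z \<in> {0..1}"
      using y spTZ by (cases y) (auto simp: space_pair_measure)
    have "0 \<le> w (t, z) x" using pw[OF x z, of t] by simp
    moreover have "0 \<le> f (x, (t, z))" using f_nonneg y yy by simp
    ultimately show "0 \<le> q y" unfolding yy qeq by (simp add: pt0)
  qed
  have Pm: "P_meas MX f = density (MX \<Otimes>\<^sub>M TZ) p"
  proof -
    have "prob_space (density TZ pt)"
    proof (rule prob_spaceI)
      have "emeasure (density TZ pt) (space (density TZ pt)) = (\<integral>\<^sup>+tz. ennreal (pt tz) * indicator (space TZ) tz \<partial>TZ)"
        by (simp add: emeasure_density)
      also have "\<dots> = (\<integral>\<^sup>+tz. ennreal (pt tz) \<partial>TZ)" by (rule nn_integral_cong) simp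
      finally show "emeasure (density TZ pt) (space (density TZ pt)) = 1" using ptint by simp
    qed
    then have sfd: "sigma_finite_measure (density TZ pt)"
      by (simp add: prob_space_imp_sigma_finite)
    have "P_meas MX f = density (MX \<Otimes>\<^sub>M TZ) (\<lambda>(x, y). ennreal (px x) * ennreal (pt y))"
      unfolding P_meas_def px_def[symmetric] pt_def[symmetric]
      by (rule pair_measure_density[OF _ _ sfTZ sfd]) measurable
    also have "(\<lambda>(x, y). ennreal (px x) * ennreal (pt y)) = (\<lambda>y. ennreal (p y))"
      by (auto simp: p_def px0 pt0 ennreal_mult)
    finally show ?thesis .
  qed
  have Qm: "Q_meas MX f w = density (MX \<Otimes>\<^sub>M TZ) q"
    unfolding Q_meas_def q_def by (simp add: case_prod_beta')
  have b1: "1 \<le> b" unfolding b_def using c1 by (simp add: one_le_power)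
  have aeMp: "AE y in MX \<Otimes>\<^sub>M TZ. p y \<le> b * q y" using aeM by (rule eventually_mono) simp
  have lnc: "ln c = ln \<Gamma>t + ln \<Gamma>z" unfolding c_def using \<Gamma>t_ge \<Gamma>z_ge by (simp add: ln_mult)
  have lnb: "ln b = 2 * (ln \<Gamma>t + ln \<Gamma>z)" unfolding b_def by (simp add: ln_realpow lnc)
  have KLb: "KL (P_meas MX f) (Q_meas MX f w) \<le> 2 * (ln \<Gamma>t + ln \<Gamma>z)"
    unfolding Pm Qm lnb[symmetric] by (rule KL_density_bound[OF p_meas q_meas pn qn pint aeMp b1])
  define T where "T = (\<lambda>(x, tz). (\<Phi> x, tz :: bool \<times> real))"
  obtain \<Psi> where \<Psi>: "\<Psi> \<in> MR \<rightarrow>\<^sub>M MX" "\<forall>x \<in> space MX. \<Psi> (\<Phi> x) = x" using \<Phi>_inv by blast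
  note [measurable] = \<Psi>(1)
  define T' where "T' = (\<lambda>(r, tz). (\<Psi> r, tz :: bool \<times> real))"
  have T_meas[measurable]: "T \<in> measurable (MX \<Otimes>\<^sub>M TZ) (MR \<Otimes>\<^sub>M TZ)" unfolding T_def by measurable
  have T'_meas: "T' \<in> measurable (MR \<Otimes>\<^sub>M TZ) (MX \<Otimes>\<^sub>M TZ)" unfolding T'_def by measurable
  have inv: "\<forall>y \<in> space (MX \<Otimes>\<^sub>M TZ). T' (T y) = y"
    using \<Psi>(2) by (auto simp: T_def T'_def space_pair_measure)
  have sfd: "sigma_finite_measure (density TZ pt)"
  proof -
    have "prob_space (density TZ pt)"
    proof (rule prob_spaceI)
      have "emeasure (density TZ pt) (space (density TZ pt)) = (\<integral>\<^sup>+tz. ennreal (pt tz) * indicator (space TZ) tz \<partial>TZ)"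
        by (simp add: emeasure_density)
      also have "\<dots> = (\<integral>\<^sup>+tz. ennreal (pt tz) \<partial>TZ)" by (rule nn_integral_cong) simp
      finally show "emeasure (density TZ pt) (space (density TZ pt)) = 1" using ptint by simp
    qed
    then show ?thesis by (simp add: prob_space_imp_sigma_finite)
  qed
  have PPhi: "P_Phi MX MR \<Phi> f = distr (P_meas MX f) (MR \<Otimes>\<^sub>M TZ) T"
  proof -
    have did: "distr (density TZ pt) TZ (\<lambda>x. x) = density TZ pt" by (rule distr_id2) simp
    have "P_Phi MX MR \<Phi> f = distr (density MX px) MR \<Phi> \<Otimes>\<^sub>M distr (density TZ pt) TZ (\<lambda>x. x)"
      unfolding P_Phi_def did px_def[symmetric] pt_def[symmetric] ..
    also have "\<dots> = distr (density MX px \<Otimes>\<^sub>M density TZ pt) (MR \<Otimes>\<^sub>M TZ) (\<lambda>(x, y). (\<Phi> x, y))"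
      by (rule pair_measure_distr) (simp_all add: did sfd)
    finally show ?thesis unfolding P_meas_def T_def px_def pt_def .
  qed
  have QPhi: "Q_Phi MX MR \<Phi> f w = distr (Q_meas MX f w) (MR \<Otimes>\<^sub>M TZ) T"
    unfolding Q_Phi_def T_def ..
  have probQ: "prob_space (Q_meas MX f w)"
  proof (rule prob_spaceI)
    have "emeasure (Q_meas MX f w) (space (Q_meas MX f w)) = (\<integral>\<^sup>+y. ennreal (q y) * indicator (space (MX \<Otimes>\<^sub>M TZ)) y \<partial>(MX \<Otimes>\<^sub>M TZ))"
      unfolding Qm by (simp add: emeasure_density)
    also have "\<dots> = (\<integral>\<^sup>+y. ennreal (q y) \<partial>(MX \<Otimes>\<^sub>M TZ))" by (rule nn_integral_cong) simp
    finally show "emeasure (Q_meas MX f w) (space (Q_meas MX f w)) = 1" using qint by simp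
  qed
  have KLeq: "KL (P_Phi MX MR \<Phi> f) (Q_Phi MX MR \<Phi> f w) = KL (P_meas MX f) (Q_meas MX f w)"
    unfolding PPhi QPhi
  proof (rule KL_distr)
    show "sigma_finite_measure (Q_meas MX f w)" using probQ by (simp add: prob_space_imp_sigma_finite)
    show "sets (P_meas MX f) = sets (Q_meas MX f w)" unfolding Pm Qm by simp
    show "absolutely_continuous (Q_meas MX f w) (P_meas MX f)" unfolding Pm Qm
      using b1 ac_density_le[OF p_meas q_meas qn _ aeMp] by simp
    show "T \<in> Q_meas MX f w \<rightarrow>\<^sub>M MR \<Otimes>\<^sub>M TZ" unfolding Qm by simp
    show "T' \<in> MR \<Otimes>\<^sub>M TZ \<rightarrow>\<^sub>M Q_meas MX f w" unfolding Qm using T'_meas by simp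
    show "\<forall>x\<in>space (Q_meas MX f w). T' (T x) = x" unfolding Qm using inv by simp
  qed
  define S :: "('r \<times> bool \<times> real \<Rightarrow> real) set" where "S = {m \<in> borel_measurable (P_Phi MX MR \<Phi> f). \<forall>y \<in> space (P_Phi MX MR \<Phi> f). \<bar>m y\<bar> \<le> 1}"
  have setsPP: "sets (P_Phi MX MR \<Phi> f) = sets (MR \<Otimes>\<^sub>M TZ)" unfolding PPhi by simp
  have spPP: "space (P_Phi MX MR \<Phi> f) = space (MR \<Otimes>\<^sub>M TZ)" unfolding PPhi by simp
  have bnd: "(\<integral>y. m y \<partial>P_Phi MX MR \<Phi> f) - (\<integral>y. m y \<partial>Q_Phi MX MR \<Phi> f w) \<le> 2 * ((b - 1) / (b + 1))"
    if m: "m \<in> S" for m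
  proof -
    have mm[measurable]: "m \<in> borel_measurable (MR \<Otimes>\<^sub>M TZ)"
      using m setsPP unfolding S_def by (simp cong: measurable_cong_sets)
    have mb: "\<And>y. y \<in> space (MR \<Otimes>\<^sub>M TZ) \<Longrightarrow> \<bar>m y\<bar> \<le> 1" using m spPP unfolding S_def by auto
    have gb: "\<And>y. y \<in> space (MX \<Otimes>\<^sub>M TZ) \<Longrightarrow> \<bar>m (T y)\<bar> \<le> 1"
      using mb measurable_space[OF T_meas] by blast
    have i1: "(\<integral>y. m y \<partial>P_Phi MX MR \<Phi> f) = (\<integral>y. m (T y) \<partial>density (MX \<Otimes>\<^sub>M TZ) p)"
      unfolding PPhi Pm by (rule integral_distr) simp_all
    have i2: "(\<integral>y. m y \<partial>Q_Phi MX MR \<Phi> f w) = (\<integral>y. m (T y) \<partial>density (MX \<Otimes>\<^sub>M TZ) q)"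
      unfolding QPhi Qm by (rule integral_distr) simp_all
    show ?thesis unfolding i1 i2
      by (rule TV_density_bound[OF p_meas q_meas _ pn qn pint qint _ b1 gb]) (use aeM in simp_all)
  qed
  have S0: "(\<lambda>_. 0) \<in> S" unfolding S_def by simp
  have sup: "(SUP m \<in> S. (\<integral>y. m y \<partial>P_Phi MX MR \<Phi> f) - (\<integral>y. m y \<partial>Q_Phi MX MR \<Phi> f w)) \<le> 2 * ((b - 1) / (b + 1))"
    using S0 bnd by (intro cSUP_least) auto
  have "tv_dist (P_Phi MX MR \<Phi> f) (Q_Phi MX MR \<Phi> f w) = 1/2 * (SUP m \<in> S. (\<integral>y. m y \<partial>P_Phi MX MR \<Phi> f) - (\<integral>y. m y \<partial>Q_Phi MX MR \<Phi> f w))"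
    unfolding tv_dist_def S_def by (rule refl)
  also have "\<dots> \<le> 1/2 * (2 * ((b - 1) / (b + 1)))" by (rule mult_left_mono[OF sup]) simp
  also have "\<dots> = (b - 1) / (b + 1)" by (simp only: mult.assoc[symmetric])
  also have "\<dots> \<le> sqrt (ln \<Gamma>t + ln \<Gamma>z)"
    unfolding b_def lnc[symmetric] by (rule tanh_sqrt_bound[OF c1])
  finally have TVb: "tv_dist (P_Phi MX MR \<Phi> f) (Q_Phi MX MR \<Phi> f w) \<le> sqrt (ln \<Gamma>t + ln \<Gamma>z)" .
  show ?thesis using KLeq KLb TVb by simp
qed

end
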